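(* Let $(T_n, n\in\mathbb N^* )$ and $T$ be $\mathbb T$-valued random variables which almost surely belong to $\mathbb T_0\cup\mathbb T_1$. Then $(T_n)$ converges in distribution to $T$ (for the metric $d$) if and only if for every $\mathbf t\in\mathbb T_0$ and every $x\in\mathcal L_0(\mathbf t)$, \[ \lim_{n\to\infty}\mathbb P(T_n\in\mathbb T(\mathbf t,x))=\mathbb P(T\in\mathbb T(\mathbf t,x))\quad\text{and}\quad \lim_{n\to\infty}\mathbb P(T_n=\mathbf t)=\mathbb P(T=\mathbf t). \]
   Context: Let $\mathcal U=\bigcup_{n\ge0}(\mathbb N^* )^n$ be the set of finite sequences of positive integers (with $(\mathbb N^* )^0=\{\emptyset\}$); $|u|$ denotes the length of $u$ and $uv$ the concatenation. A tree is a subset $\mathbf t\subset\mathcal U$ with $\emptyset\in\mathbf t$, such that $uv\in\mathbf t$ implies $u\in\mathbf t$, and such that for every $u\in\mathbf t$ there is an integer $k_u(\mathbf t)\ge0$ with $ui\in\mathbf t\iff 1\le i\le k_u(\mathbf t)$ for $i\in\mathbb N^*$. The leaves are $\mathcal L_0(\mathbf t)=\{u\in\mathbf t:k_u(\mathbf t)=0\}$. $\mathbb T$ is the set of trees, $\mathbb T_0$ the set of finite trees. For a set $\mathbf s\subset\mathcal U$, $M(\mathbf s)$ is the longest $u\in\mathcal U$ which is a prefix (ancestor) of every element of $\mathbf s$; $\mathbb T_1=\{\mathbf t\in\mathbb T:\lim_{n\to\infty}|M(\{u\in\mathbf t:|u|=n\})|=+\infty\}$ is the set of trees with a unique infinite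 spine. For $h\in\mathbb N$, $r_h(\mathbf t)=\{u\in\mathbf t:|u|\le h\}$, and $\mathbb T$ carries the metric $d(\mathbf t,\mathbf t')=2^{-\max\{h\in\mathbb N:r_h(\mathbf t)=r_h(\mathbf t')\}}$ (with its Borel $\sigma$-field); convergence in distribution refers to this metric. For $\mathbf t\in\mathbb T$, $x\in\mathcal L_0(\mathbf t)$ and $\mathbf s\in\mathbb T$, the grafted tree is $\mathbf t\circledast(\mathbf s,x)=\mathbf t\cup\{xv:v\in\mathbf s\}$, and $\mathbb T(\mathbf t,x)=\{\mathbf t\circledast(\mathbf s,x):\mathbf s\in\mathbb T\}$. *)

theory Defs
  imports "HOL-Probability.Probability" "HOL-Library.Sublist"
begin

text \<open>Nodes: finite sequences of positive integers, represented as lists of naturals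
  all of whose entries are at least 1.  Trees are sets of such nodes.\<close>

type_synonym node = "nat list"

definition is_tree :: "node set \<Rightarrow> bool" where
  "is_tree t \<longleftrightarrow>
     (\<forall>u\<in>t. \<forall>i\<in>set u. 1 \<le> i) \<and>
     [] \<in> t \<and>
     (\<forall>u v. u @ v \<in> t \<longrightarrow> u \<in> t) \<and>
     (\<forall>u\<in>t. \<exists>k::nat. \<forall>i::nat. 1 \<le> i \<longrightarrow> (u @ [i] \<in> t \<longleftrightarrow> i \<le> k))"

definition Trees :: "node set set" where
  "Trees = {t. is_tree t}"

definition Trees0 :: "node set set" where
  "Trees0 = {t \<in> Trees. finite t}"

definition leaves :: "node set \<Rightarrow> node set" where
  "leaves t = {u \<in> t. \<forall>i::nat. 1 \<le> i \<longrightarrow> u @ [i] \<notin> t}"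

text \<open>Longest common prefix (ancestor) of a set of nodes (meaningful for nonempty sets).\<close>
definition M_pref :: "node set \<Rightarrow> node" where
  "M_pref s = (THE u. (\<forall>v\<in>s. prefix u v) \<and>
                       (\<forall>w. (\<forall>v\<in>s. prefix w v) \<longrightarrow> length w \<le> length u))"

definition level :: "node set \<Rightarrow> nat \<Rightarrow> node set" where
  "level t n = {u \<in> t. length u = n}"

definition Trees1 :: "node set set" where
  "Trees1 = {t \<in> Trees. (\<forall>n. level t n \<noteq> {}) \<and>
              filterlim (\<lambda>n. length (M_pref (level t n))) at_top sequentially}"

definition restr :: "nat \<Rightarrow> node set \<Rightarrow> node set" where
  "restr h t = {u \<in> t. length u \<le> h}"

definition tree_dist :: "node set \<Rightarrow> node set \<Rightarrow> real" where
  "tree_dist t t' = (if t = t' then 0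
                     else (1/2) ^ (GREATEST h. restr h t = restr h t'))"

definition tree_open :: "node set set \<Rightarrow> bool" where
  "tree_open U \<longleftrightarrow> U \<subseteq> Trees \<and>
     (\<forall>t\<in>U. \<exists>e>0. \<forall>t'\<in>Trees. tree_dist t t' < e \<longrightarrow> t' \<in> U)"

definition tree_space :: "node set measure" where
  "tree_space = sigma Trees {U. tree_open U}"

definition tree_bounded_continuous :: "(node set \<Rightarrow> real) \<Rightarrow> bool" where
  "tree_bounded_continuous f \<longleftrightarrow>
     (\<exists>B. \<forall>t\<in>Trees. \<bar>f t\<bar> \<le> B) \<and>
     (\<forall>t\<in>Trees. \<forall>e>0. \<exists>\<delta>>0. \<forall>t'\<in>Trees. tree_dist t t' < \<delta> \<longrightarrow> \<bar>f t' - f t\<bar> < e)"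

definition conv_distr :: "'a measure \<Rightarrow> (nat \<Rightarrow> 'a \<Rightarrow> node set) \<Rightarrow> ('a \<Rightarrow> node set) \<Rightarrow> bool" where
  "conv_distr P T X \<longleftrightarrow>
     (\<forall>f. tree_bounded_continuous f \<longrightarrow>
        (\<lambda>n. \<integral>\<omega>. f (T n \<omega>) \<partial>P) \<longlonglongrightarrow> (\<integral>\<omega>. f (X \<omega>) \<partial>P))"

definition graft :: "node set \<Rightarrow> node set \<Rightarrow> node \<Rightarrow> node set" where
  "graft t s x = t \<union> {x @ v | v. v \<in> s}"

definition graft_set :: "node set \<Rightarrow> node \<Rightarrow> node set set" where
  "graft_set t x = {graft t s x | s. s \<in> Trees}"

end

theory Submission
  imports Defs
begin

lemma tree_pref: "is_tree t \<Longrightarrow> u \<in> t \<Longrightarrow> prefix v u \<Longrightarrow> v \<in> t"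
  unfolding is_tree_def prefix_def by auto

lemma restr_restr: "h \<le> H \<Longrightarrow> restr h (restr H t) = restr h t"
  unfolding restr_def by auto

lemma restr_0: "is_tree t \<Longrightarrow> restr 0 t = {[]}"
  unfolding restr_def is_tree_def by auto

lemma restr_neq:
  assumes "is_tree t" "is_tree t'" "t \<noteq> t'"
  shows "\<exists>b. \<forall>h. restr h t = restr h t' \<longrightarrow> h \<le> b"
proof -
  obtain u where u: "(u \<in> t) \<noteq> (u \<in> t')" using assms(3) by blast
  have "h \<le> length u" if "restr h t = restr h t'" for h
  proof (rule ccontr)
    assume "\<not> h \<le> length u"
    then have "(u \<in> restr h t) = (u \<in> t)" "(u \<in> restr h t') = (u \<in> t')" unfolding restr_def by auto
    with that u show False by auto
  qed
  then show ?thesis by blast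
qed

lemma dist_restr:
  assumes "t \<in> Trees" "t' \<in> Trees" "tree_dist t t' < (1/2)^h"
  shows "restr h t = restr h t'"
proof (cases "t = t'")
  case False
  have tt: "is_tree t" "is_tree t'" using assms unfolding Trees_def by auto
  obtain b where b: "\<forall>h. restr h t = restr h t' \<longrightarrow> h \<le> b" using restr_neq[OF tt False] by blast
  let ?H = "GREATEST h. restr h t = restr h t'"
  have "restr 0 t = restr 0 t'" using restr_0 tt by simp
  then have H: "restr ?H t = restr ?H t'"
    by (rule GreatestI_nat[where k=0 and b=b]) (use b in blast)
  have "(1/2::real)^?H < (1/2)^h" using assms(3) False unfolding tree_dist_def by simp
  then have "h < ?H" by (subst (asm) power_strict_decreasing_iff) auto
  then have "restr h (restr ?H t) = restr h (restr ?H t')" using H by simp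
  then show ?thesis using restr_restr[of h ?H] \<open>h < ?H\<close> by simp
qed simp

lemma restr_dist:
  assumes "t \<in> Trees" "t' \<in> Trees" "restr h t = restr h t'"
  shows "tree_dist t t' \<le> (1/2)^h"
proof (cases "t = t'")
  case False
  have tt: "is_tree t" "is_tree t'" using assms unfolding Trees_def by auto
  obtain b where b: "\<forall>h. restr h t = restr h t' \<longrightarrow> h \<le> b" using restr_neq[OF tt False] by blast
  let ?H = "GREATEST h. restr h t = restr h t'"
  have "h \<le> ?H" by (rule Greatest_le_nat[where b=b]) (use b assms(3) in blast)+
  then show ?thesis using False unfolding tree_dist_def by (simp add: power_decreasing)
qed (simp add: tree_dist_def)

definition cyl :: "nat \<Rightarrow> node set set \<Rightarrow> bool" where
  "cyl h G \<longleftrightarrow> (\<forall>t\<in>Trees. \<forall>t'\<in>Trees. restr h t = restr h t' \<longrightarrow> (t \<in> G \<longleftrightarrow> t' \<in> G))"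

lemma cyl_open: assumes "G \<subseteq> Trees" "cyl h G" shows "tree_open G"
  unfolding tree_open_def
proof (intro conjI assms ballI)
  fix t assume t: "t \<in> G"
  show "\<exists>e>0. \<forall>t'\<in>Trees. tree_dist t t' < e \<longrightarrow> t' \<in> G"
  proof (intro exI[of _ "(1/2)^h"] conjI ballI impI)
    fix t' assume "t' \<in> Trees" "tree_dist t t' < (1/2)^h"
    moreover have "t \<in> Trees" using t assms(1) by blast
    ultimately have "restr h t = restr h t'" using dist_restr[of t t' h] by simp
    from assms(2)[unfolded cyl_def, rule_format, OF \<open>t \<in> Trees\<close> \<open>t' \<in> Trees\<close> this]
    show "t' \<in> G" using t by blast
  qed simp
qed

lemma cyl_open_compl: assumes "cyl h G" shows "tree_open (Trees - G)"
  unfolding tree_open_def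
proof (intro conjI ballI)
  fix t assume t: "t \<in> Trees - G"
  show "\<exists>e>0. \<forall>t'\<in>Trees. tree_dist t t' < e \<longrightarrow> t' \<in> Trees - G"
  proof (intro exI[of _ "(1/2)^h"] conjI ballI impI)
    fix t' assume "t' \<in> Trees" "tree_dist t t' < (1/2)^h"
    moreover have "t \<in> Trees" using t by blast
    ultimately have "restr h t = restr h t'" using dist_restr[of t t' h] by simp
    from assms[unfolded cyl_def, rule_format, OF \<open>t \<in> Trees\<close> \<open>t' \<in> Trees\<close> this]
    show "t' \<in> Trees - G" using t \<open>t' \<in> Trees\<close> by blast
  qed simp
qed auto

lemma tree_open_sets: "tree_open U \<Longrightarrow> U \<in> sets tree_space"
  unfolding tree_space_def
  by (subst sets_measure_of) (auto simp: tree_open_def)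

lemma space_tree_space: "space tree_space = Trees"
  unfolding tree_space_def by (subst space_measure_of) (auto simp: tree_open_def)

lemma cyl_sets: "cyl h G \<Longrightarrow> G \<inter> Trees \<in> sets tree_space"
proof -
  assume "cyl h G"
  then have "cyl h (G \<inter> Trees)" unfolding cyl_def by blast
  then show ?thesis by (intro tree_open_sets cyl_open) auto
qed

lemma finite_restr:
  assumes "is_tree t" shows "finite (restr n t)"
proof (induction n)
  case 0 then show ?case using restr_0[OF assms] by simp
next
  case (Suc n)
  define K where "K u = (SOME k::nat. \<forall>i::nat. 1 \<le> i \<longrightarrow> (u @ [i] \<in> t \<longleftrightarrow> i \<le> k))" for u
  have K: "\<forall>i::nat. 1 \<le> i \<longrightarrow> (u @ [i] \<in> t \<longleftrightarrow> i \<le> K u)" if "u \<in> t" for u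
    unfolding K_def by (rule someI_ex) (use assms that in \<open>auto simp: is_tree_def\<close>)
  have sub: "restr (Suc n) t \<subseteq> restr n t \<union> (\<Union>u\<in>restr n t. (\<lambda>i. u @ [i]) ` {..K u})"
  proof
    fix v assume v: "v \<in> restr (Suc n) t"
    show "v \<in> restr n t \<union> (\<Union>u\<in>restr n t. (\<lambda>i. u @ [i]) ` {..K u})"
    proof (cases "length v \<le> n")
      case True then show ?thesis using v unfolding restr_def by auto
    next
      case False
      then have ne: "v \<noteq> []" by auto
      then have vv: "v = butlast v @ [last v]" by simp
      have bt: "butlast v \<in> t" using tree_pref[OF assms, of v "butlast v"] v
        unfolding restr_def by (auto simp: prefix_def intro: vv)
      have "1 \<le> last v" using assms v ne unfolding is_tree_def restr_def by auto
      then have "last v \<le> K (butlast v)" using K[OF bt] v vv unfolding restr_def by (metis (mono_tags, lifting) mem_Collect_eq)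
      moreover have "butlast v \<in> restr n t" using bt v unfolding restr_def by auto
      ultimately show ?thesis using vv by blast
    qed
  qed
  have "finite (restr n t \<union> (\<Union>u\<in>restr n t. (\<lambda>i. u @ [i]) ` {..K u}))"
    using Suc by blast
  then show ?case using sub finite_subset by blast
qed

definition Gr :: "node set \<Rightarrow> node \<Rightarrow> node set set" where
  "Gr t x = {w\<in>Trees. t \<subseteq> w \<and> (\<forall>u\<in>w. u \<notin> t \<longrightarrow> prefix x u)}"

lemma Gr_sub: "Gr t x \<subseteq> Trees" unfolding Gr_def by blast

lemma graft_Gr:
  assumes "x \<in> t"
  shows "graft_set t x \<inter> Trees = Gr t x"
proof
  show "graft_set t x \<inter> Trees \<subseteq> Gr t x"
    unfolding graft_set_def graft_def Gr_def by auto
next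
  show "Gr t x \<subseteq> graft_set t x \<inter> Trees"
  proof
    fix w assume w: "w \<in> Gr t x"
    then have wt: "is_tree w" "t \<subseteq> w" "\<forall>u\<in>w. u \<notin> t \<longrightarrow> prefix x u"
      unfolding Gr_def Trees_def by auto
    define s where "s = {v. x @ v \<in> w}"
    have "is_tree s" unfolding is_tree_def
    proof (intro conjI ballI allI impI)
      show "\<And>u i. u \<in> s \<Longrightarrow> i \<in> set u \<Longrightarrow> 1 \<le> i"
        using wt(1) unfolding is_tree_def s_def by fastforce
      show "[] \<in> s" using assms wt(2) unfolding s_def by auto
      show "u \<in> s" if "u @ v \<in> s" for u v
      proof -
        have "x @ u @ v \<in> w" using that unfolding s_def by simp
        moreover have "prefix (x @ u) (x @ u @ v)" by simp
        ultimately show ?thesis using tree_pref[OF wt(1)] unfolding s_def by blast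
      qed
      show "\<exists>k. \<forall>i. 1 \<le> i \<longrightarrow> (u @ [i] \<in> s) = (i \<le> k)" if "u \<in> s" for u
      proof -
        have "x @ u \<in> w" using that unfolding s_def by simp
        then obtain k where "\<forall>i::nat. 1 \<le> i \<longrightarrow> ((x @ u) @ [i] \<in> w \<longleftrightarrow> i \<le> k)"
          using wt(1) unfolding is_tree_def by blast
        then show ?thesis unfolding s_def by auto
      qed
    qed
    moreover have "w = graft t s x"
    proof
      show "w \<subseteq> graft t s x"
      proof
        fix u assume "u \<in> w"
        show "u \<in> graft t s x"
        proof (cases "u \<in> t")
          case False
          then obtain v where "u = x @ v" using wt(3) \<open>u \<in> w\<close> by (auto simp: prefix_def)
          then show ?thesis using \<open>u \<in> w\<close> unfolding graft_def s_def by auto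
        qed (auto simp: graft_def)
      qed
      show "graft t s x \<subseteq> w" using wt(2) unfolding graft_def s_def by auto
    qed
    ultimately show "w \<in> graft_set t x \<inter> Trees" using w unfolding graft_set_def Trees_def Gr_def by auto
  qed
qed

lemma leaf_pref:
  assumes "is_tree t" "x \<in> leaves t" "u \<in> t" "prefix x u"
  shows "u = x"
proof (rule ccontr)
  assume "u \<noteq> x"
  then obtain v where v: "u = x @ v" "v \<noteq> []" using assms(4) by (auto simp: prefix_def)
  have "prefix (x @ [hd v]) u" using v by (cases v) (auto simp: prefix_def)
  then have "x @ [hd v] \<in> t" using tree_pref[OF assms(1) assms(3)] by blast
  moreover have "1 \<le> hd v" using assms(1,3) v unfolding is_tree_def by (cases v) auto
  ultimately show False using assms(2) unfolding leaves_def by blast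
qed

lemma leaves_in: "x \<in> leaves t \<Longrightarrow> x \<in> t" unfolding leaves_def by blast

lemma finite_height: "finite t \<Longrightarrow> \<exists>h. \<forall>u\<in>t. length u < h"
proof -
  assume "finite t"
  then have "finite (length ` t)" by simp
  then obtain b where "\<forall>n\<in>length ` t. n \<le> b" using finite_nat_set_iff_bounded_le by blast
  then show ?thesis by (intro exI[of _ "Suc b"]) auto
qed

lemma restr_full:
  assumes "is_tree w" "\<forall>u\<in>restr h w. length u < h"
  shows "restr h w = w"
proof -
  have "length u \<le> h" if "u \<in> w" for u
  proof (rule ccontr)
    assume "\<not> length u \<le> h"
    then have "take h u \<in> restr h w" using tree_pref[OF assms(1) that, of "take h u"]
      unfolding restr_def by (simp add: take_is_prefix)
    moreover have "length (take h u) = h" using \<open>\<not> length u \<le> h\<close> by simp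
    ultimately show False using assms(2) by fastforce
  qed
  then show ?thesis unfolding restr_def by auto
qed

lemma cyl_single:
  assumes "\<forall>u\<in>t. length u < h"
  shows "cyl h {t}"
  unfolding cyl_def
proof (intro ballI impI)
  fix t1 t2 assume t12: "t1 \<in> Trees" "t2 \<in> Trees" "restr h t1 = restr h t2"
  have *: "a = t" if "a \<in> Trees" "b \<in> Trees" "restr h a = restr h b" "b = t" for a b
  proof -
    have rb: "restr h b = b" using that(4) assms unfolding restr_def by auto
    have "\<forall>u\<in>restr h a. length u < h" using that(3,4) rb assms by simp
    then have "restr h a = a" using restr_full that(1) unfolding Trees_def by blast
    then show ?thesis using that(3,4) rb by simp
  qed
  show "(t1 \<in> {t}) = (t2 \<in> {t})"
    using *[of t1 t2] *[of t2 t1] t12 by auto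
qed

lemma cyl_Gr1:
  assumes "x \<in> t" "\<forall>u\<in>t. length u < h" "t1 \<in> Gr t x" "t2 \<in> Trees" "restr h t1 = restr h t2"
  shows "t2 \<in> Gr t x"
proof -
  have g: "is_tree t1" "t \<subseteq> t1" "\<forall>u\<in>t1. u \<notin> t \<longrightarrow> prefix x u" using assms(3) unfolding Gr_def Trees_def by auto
  have t2: "is_tree t2" using assms(4) unfolding Trees_def by auto
  have "t \<subseteq> restr h t1" using g(2) assms(2) unfolding restr_def by fastforce
  then have sub: "t \<subseteq> t2" using assms(5) unfolding restr_def by auto
  have "prefix x u" if "u \<in> t2" "u \<notin> t" for u
  proof (cases "length u \<le> h")
    case True
    then have "u \<in> t1" using assms(5) that unfolding restr_def by blast
    then show ?thesis using g(3) that by blast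
  next
    case False
    have "take h u \<in> restr h t2" using tree_pref[OF t2 that(1), of "take h u"] False
      unfolding restr_def by (simp add: take_is_prefix)
    then have "take h u \<in> t1" using assms(5) unfolding restr_def by blast
    moreover have "take h u \<notin> t" using assms(2) False by fastforce
    ultimately have "prefix x (take h u)" using g(3) by blast
    then show ?thesis using take_is_prefix[of h u] by (rule prefix_order.trans)
  qed
  then show ?thesis using sub assms(4) unfolding Gr_def by blast
qed

lemma cyl_Gr:
  assumes "x \<in> t" "\<forall>u\<in>t. length u < h"
  shows "cyl h (Gr t x)"
  unfolding cyl_def
proof (intro ballI)
  fix t1 t2 assume "t1 \<in> Trees" "t2 \<in> Trees"
  then show "restr h t1 = restr h t2 \<longrightarrow> (t1 \<in> Gr t x) = (t2 \<in> Gr t x)"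
    using cyl_Gr1[OF assms, of t1 t2] cyl_Gr1[OF assms, of t2 t1] Gr_sub by blast
qed

lemma Gr_nested:
  assumes "is_tree t" "x \<in> leaves t" "x' \<in> t'" "prefix x x'" "w \<in> Gr t x" "w \<in> Gr t' x'"
  shows "Gr t' x' \<subseteq> Gr t x"
proof
  fix w' assume w': "w' \<in> Gr t' x'"
  have W: "t \<subseteq> w" "\<forall>u\<in>w. u \<notin> t \<longrightarrow> prefix x u" "t' \<subseteq> w" "\<forall>u\<in>w. u \<notin> t' \<longrightarrow> prefix x' u"
    using assms(5,6) unfolding Gr_def by auto
  have W': "w' \<in> Trees" "t' \<subseteq> w'" "\<forall>u\<in>w'. u \<notin> t' \<longrightarrow> prefix x' u"
    using w' unfolding Gr_def by auto
  have "t \<subseteq> w'"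
  proof
    fix u assume u: "u \<in> t"
    show "u \<in> w'"
    proof (cases "u \<in> t'")
      case False
      then have "prefix x' u" using W u by blast
      then have "prefix x u" using prefix_order.trans[OF assms(4)] by blast
      then have "u = x" using leaf_pref[OF assms(1,2) u] by simp
      then have "x = x'" using \<open>prefix x' u\<close> assms(4) by simp
      then show ?thesis using False assms(3) \<open>u = x\<close> by simp
    qed (use W' in blast)
  qed
  moreover have "prefix x u" if "u \<in> w'" "u \<notin> t" for u
  proof (cases "u \<in> t'")
    case True
    then show ?thesis using W that by blast
  next
    case False
    then have "prefix x' u" using W' that by blast
    then show ?thesis using assms(4) by (rule prefix_order.trans[rotated])
  qed
  ultimately show "w' \<in> Gr t x" using W' unfolding Gr_def by blast
qed

lemma Gr_incomp:
  assumes "\<not> prefix x x'" "\<not> prefix x' x" "w1 \<in> Gr t x \<inter> Gr t' x'" "w2 \<in> Gr t x \<inter> Gr t' x'"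
  shows "w1 \<subseteq> w2"
proof
  fix u assume u: "u \<in> w1"
  show "u \<in> w2"
  proof (cases "u \<in> t \<or> u \<in> t'")
    case True then show ?thesis using assms(4) unfolding Gr_def by blast
  next
    case False
    then have "prefix x u" "prefix x' u" using assms(3) u unfolding Gr_def by blast+
    then have "prefix x x' \<or> prefix x' x" using prefix_same_cases by blast
    then show ?thesis using assms(1,2) by blast
  qed
qed

lemma Gr_incomp_sub:
  assumes "\<not> prefix x x'" "\<not> prefix x' x" "w \<in> Gr t x \<inter> Gr t' x'"
  shows "w \<subseteq> t \<union> t'"
proof
  fix u assume u: "u \<in> w"
  show "u \<in> t \<union> t'"
  proof (rule ccontr)
    assume "u \<notin> t \<union> t'"
    then have "prefix x u" "prefix x' u" using assms(3) u unfolding Gr_def by blast+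
    then have "prefix x x' \<or> prefix x' x" using prefix_same_cases by blast
    then show False using assms(1,2) by blast
  qed
qed

lemma Gr_inter:
  assumes "t \<in> Trees0" "x \<in> leaves t" "t' \<in> Trees0" "x' \<in> leaves t'"
  shows "Gr t x \<inter> Gr t' x' = {} \<or> Gr t x \<inter> Gr t' x' = Gr t x \<or> Gr t x \<inter> Gr t' x' = Gr t' x'
     \<or> (\<exists>w\<in>Trees0. Gr t x \<inter> Gr t' x' = {w})"
proof (cases "Gr t x \<inter> Gr t' x' = {}")
  case False
  then obtain w where w: "w \<in> Gr t x \<inter> Gr t' x'" by blast
  have tt: "is_tree t" "is_tree t'" "finite t" "finite t'" using assms unfolding Trees0_def Trees_def by auto
  have xx: "x \<in> t" "x' \<in> t'" using assms leaves_in by auto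
  show ?thesis
  proof (cases "prefix x x'")
    case True
    then have "Gr t' x' \<subseteq> Gr t x" using Gr_nested[OF tt(1) assms(2) xx(2) True] w by blast
    then show ?thesis by blast
  next
    case F1: False
    show ?thesis
    proof (cases "prefix x' x")
      case True
      then have "Gr t x \<subseteq> Gr t' x'" using Gr_nested[OF tt(2) assms(4) xx(1) True] w by blast
      then show ?thesis by blast
    next
      case False
      have "Gr t x \<inter> Gr t' x' = {w}"
        using Gr_incomp[OF F1 False] w by blast
      moreover have "w \<in> Trees0"
        using Gr_incomp_sub[OF F1 False w] tt w unfolding Trees0_def Gr_def
        by (auto intro: finite_subset)
      ultimately show ?thesis by blast
    qed
  qed
qed simp

lemma M_pref_prop:
  assumes "s \<noteq> {}"
  shows "\<forall>v\<in>s. prefix (M_pref s) v"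
proof -
  obtain v0 where v0: "v0 \<in> s" using assms by blast
  define C where "C u \<longleftrightarrow> (\<forall>v\<in>s. prefix u v)" for u
  have Cb: "length u \<le> length v0" if "C u" for u
    using that v0 unfolding C_def by (auto intro: prefix_length_le)
  obtain n where n: "\<exists>u. C u \<and> length u = n" "\<forall>m. (\<exists>u. C u \<and> length u = m) \<longrightarrow> m \<le> n"
    using Nat.ex_has_greatest_nat[of "\<lambda>m. \<exists>u. C u \<and> length u = m" 0 "length v0"] Cb
    unfolding C_def by fastforce
  obtain u where u: "C u" "length u = n" using n(1) by blast
  have ex: "C u \<and> (\<forall>w. C w \<longrightarrow> length w \<le> length u)" using u n(2) by blast
  have uniq: "z = u" if "C z \<and> (\<forall>w. C w \<longrightarrow> length w \<le> length z)" for z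
  proof -
    have "length z = length u" using that ex by (simp add: le_antisym)
    moreover have "prefix z v0" "prefix u v0" using that ex v0 unfolding C_def by auto
    ultimately show ?thesis by (metis prefix_length_prefix prefix_order.antisym order_refl)
  qed
  have "M_pref s = u" unfolding M_pref_def
    using the_equality[of "\<lambda>u. C u \<and> (\<forall>w. C w \<longrightarrow> length w \<le> length u)" u, OF ex uniq]
    unfolding C_def by simp
  then show ?thesis using u(1) unfolding C_def by simp
qed

lemma T1_nbhd:
  assumes "c \<in> Trees1"
  shows "\<exists>t0\<in>Trees0. \<exists>x\<in>leaves t0. c \<in> Gr t0 x \<and> (\<forall>w\<in>Gr t0 x. restr h w = restr h c)"
proof -
  have c: "is_tree c" "\<And>n. level c n \<noteq> {}" "filterlim (\<lambda>n. length (M_pref (level c n))) at_top sequentially"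
    using assms unfolding Trees1_def Trees_def by auto
  have "eventually (\<lambda>n. h \<le> length (M_pref (level c n))) sequentially"
    using c(3) unfolding filterlim_at_top by blast
  then obtain n where n: "h \<le> length (M_pref (level c n))" unfolding eventually_sequentially by blast
  define y where "y = M_pref (level c n)"
  have yp: "\<forall>v\<in>level c n. prefix y v" unfolding y_def using M_pref_prop[OF c(2)] .
  obtain v0 where v0: "v0 \<in> level c n" using c(2) by blast
  have "prefix y v0" using yp v0 by blast
  then have yc: "y \<in> c" and yl: "length y \<le> n" using v0 tree_pref[OF c(1)] prefix_length_le
    unfolding level_def by fastforce+
  define x where "x = take h y"
  have xl: "length x = h" using n unfolding x_def y_def by simp
  have xy: "prefix x y" unfolding x_def by (rule take_is_prefix)
  have xc: "x \<in> c" using tree_pref[OF c(1) yc xy] .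
  have xv: "prefix x v" if "v \<in> level c n" for v
    using prefix_order.trans[OF xy] yp that by blast
  have hn: "h \<le> n" using xl yl xy prefix_length_le by fastforce
  define t0 where "t0 = {u\<in>c. \<not> (prefix x u \<and> u \<noteq> x)}"
  have t0c: "t0 \<subseteq> c" unfolding t0_def by blast
  have xt0: "x \<in> t0" using xc unfolding t0_def by simp
  have istree: "is_tree t0" unfolding is_tree_def
  proof (intro conjI ballI allI impI)
    show "\<And>u i. u \<in> t0 \<Longrightarrow> i \<in> set u \<Longrightarrow> 1 \<le> i" using c(1) t0c unfolding is_tree_def by blast
    show "[] \<in> t0"
    proof -
      have "[] \<in> c" using c(1) unfolding is_tree_def by blast
      moreover have "\<not> (prefix x [] \<and> [] \<noteq> x)" by simp
      ultimately show ?thesis unfolding t0_def by blast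
    qed
    show "u \<in> t0" if "u @ v \<in> t0" for u v
    proof -
      have "u @ v \<in> c" "\<not> (prefix x (u @ v) \<and> u @ v \<noteq> x)" using that unfolding t0_def by auto
      moreover have "u \<in> c" using tree_pref[OF c(1) \<open>u @ v \<in> c\<close>, of u] by simp
      moreover have "\<not> (prefix x u \<and> u \<noteq> x)"
      proof
        assume a: "prefix x u \<and> u \<noteq> x"
        then have "prefix x (u @ v)" using prefix_order.trans by (metis prefixI)
        moreover have "u @ v \<noteq> x" using a
          by (metis Nil_is_append_conv append.assoc prefix_def prefix_order.antisym prefixI)
        ultimately show False using \<open>\<not> (prefix x (u @ v) \<and> u @ v \<noteq> x)\<close> by blast
      qed
      ultimately show ?thesis unfolding t0_def by blast
    qed
    show "\<exists>k. \<forall>i. 1 \<le> i \<longrightarrow> (u @ [i] \<in> t0) = (i \<le> k)" if u: "u \<in> t0" for u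
    proof (cases "u = x")
      case True
      have "u @ [i] \<notin> t0" for i using True unfolding t0_def by simp
      then show ?thesis by (intro exI[of _ 0]) auto
    next
      case False
      then have npx: "\<not> prefix x u" using u unfolding t0_def by blast
      obtain k where k: "\<forall>i::nat. 1 \<le> i \<longrightarrow> (u @ [i] \<in> c \<longleftrightarrow> i \<le> k)"
        using c(1) u t0c unfolding is_tree_def by blast
      have "\<not> (prefix x (u @ [i]) \<and> u @ [i] \<noteq> x)" for i
        using npx by (auto simp: prefix_Cons prefix_append)
      then have "(u @ [i] \<in> t0) = (u @ [i] \<in> c)" for i unfolding t0_def by blast
      then show ?thesis using k by metis
    qed
  qed
  have t0r: "t0 \<subseteq> restr n c"
  proof
    fix u assume u: "u \<in> t0"
    have "length u \<le> n"
    proof (rule ccontr)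
      assume nl: "\<not> length u \<le> n"
      have "take n u \<in> level c n" using tree_pref[OF c(1), of u "take n u"] u t0c nl
        unfolding level_def by (auto simp: take_is_prefix)
      then have "prefix x (take n u)" using xv by blast
      then have "prefix x u" using prefix_order.trans take_is_prefix by blast
      moreover have "u \<noteq> x" using nl xl hn by auto
      ultimately show False using u unfolding t0_def by blast
    qed
    then show "u \<in> restr n c" using u t0c unfolding restr_def by blast
  qed
  have fin: "finite t0" using finite_subset[OF t0r finite_restr[OF c(1)]] .
  have xleaf: "x \<in> leaves t0" using xt0 unfolding leaves_def t0_def by auto
  have cG: "c \<in> Gr t0 x" using c(1) t0c unfolding Gr_def Trees_def t0_def by auto
  have close: "restr h w = restr h c" if w: "w \<in> Gr t0 x" for w
  proof -
    have W: "t0 \<subseteq> w" "\<forall>u\<in>w. u \<notin> t0 \<longrightarrow> prefix x u" using w unfolding Gr_def by auto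
    have "u \<in> t0" if "u \<in> w" "length u \<le> h" for u
    proof (rule ccontr)
      assume "u \<notin> t0"
      then have "prefix x u" "u \<noteq> x" using W that xt0 by auto
      then have "length x < length u" using prefix_length_less[of x u] by (auto simp: strict_prefix_def)
      then show False using that xl by simp
    qed
    moreover have "u \<in> t0" if "u \<in> c" "length u \<le> h" for u
    proof (rule ccontr)
      assume "u \<notin> t0"
      then have "prefix x u" "u \<noteq> x" using that unfolding t0_def by auto
      then have "length x < length u" using prefix_length_less[of x u] by (auto simp: strict_prefix_def)
      then show False using that xl by simp
    qed
    ultimately show ?thesis using W(1) t0c unfolding restr_def by blast
  qed
  have "t0 \<in> Trees0" using istree fin unfolding Trees0_def Trees_def by blast
  then show ?thesis using xleaf cG close by blast
qed

definition Cls :: "node set set set" where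
  "Cls = {{t} | t. t \<in> Trees0} \<union> {Gr t x | t x. t \<in> Trees0 \<and> x \<in> leaves t}"

lemma Cls_sets: "A \<in> insert {} Cls \<Longrightarrow> A \<in> sets tree_space \<and> A \<subseteq> Trees"
proof -
  assume "A \<in> insert {} Cls"
  then consider "A = {}" | t where "t \<in> Trees0" "A = {t}" | t x where "t \<in> Trees0" "x \<in> leaves t" "A = Gr t x"
    unfolding Cls_def by blast
  then show ?thesis
  proof cases
    case 1 then show ?thesis by simp
  next
    case 2
    then obtain h where "\<forall>u\<in>t. length u < h" using finite_height unfolding Trees0_def by blast
    then have "{t} \<inter> Trees \<in> sets tree_space" using cyl_single cyl_sets by blast
    moreover have "t \<in> Trees" using 2 unfolding Trees0_def by blast
    ultimately show ?thesis using 2 by simp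
  next
    case 3
    then obtain h where "\<forall>u\<in>t. length u < h" using finite_height unfolding Trees0_def by blast
    then have "Gr t x \<inter> Trees \<in> sets tree_space" using cyl_sets[OF cyl_Gr[OF leaves_in[OF 3(2)]]] by blast
    moreover have "Gr t x \<subseteq> Trees" by (rule Gr_sub)
    ultimately show ?thesis using 3 by (simp add: Int_absorb2)
  qed
qed

lemma Cls_inter:
  assumes "A \<in> insert {} Cls" "B \<in> insert {} Cls"
  shows "A \<inter> B \<in> insert {} Cls"
proof -
  have single: "A \<inter> B \<in> insert {} Cls" if "A \<in> insert {} Cls" "A = {t}" "t \<in> Trees0" for A B t
  proof (cases "t \<in> B")
    case True then show ?thesis using that unfolding Cls_def by auto
  next
    case False then show ?thesis using that by auto
  qed
  from assms(1) consider "A = {}" | t where "t \<in> Trees0" "A = {t}" | t x where "t \<in> Trees0" "x \<in> leaves t" "A = Gr t x"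
    unfolding Cls_def by blast
  then show ?thesis
  proof cases
    case 1 then show ?thesis by simp
  next
    case 2 then show ?thesis using single[OF assms(1)] by blast
  next
    case 3
    from assms(2) consider "B = {}" | t' where "t' \<in> Trees0" "B = {t'}" | t' x' where "t' \<in> Trees0" "x' \<in> leaves t'" "B = Gr t' x'"
      unfolding Cls_def by blast
    then show ?thesis
    proof cases
      case 1 then show ?thesis by simp
    next
      case 2 then show ?thesis using single[OF assms(2), of _ A] by (simp add: Int_commute)
    next
      case 4: 3
      show ?thesis using Gr_inter[OF 3(1,2) 4(1,2)] 3 4 assms unfolding Cls_def by auto
    qed
  qed
qed

lemma Cls_countable: "countable (insert {} Cls)"
proof -
  have T0: "countable Trees0"
    by (rule countable_subset[OF _ countable_Collect_finite]) (auto simp: Trees0_def)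
  have "Cls = (\<lambda>t. {t}) ` Trees0 \<union> (\<lambda>(t,x). Gr t x) ` (SIGMA t:Trees0. leaves t)"
    unfolding Cls_def by auto
  moreover have cS: "countable (SIGMA t:Trees0. leaves t)"
    by (rule countable_SIGMA[OF T0]) (rule countable_subset[OF subset_UNIV], simp)
  ultimately have "countable Cls" using T0 by (metis countable_Un countable_image)
  then show ?thesis by simp
qed

lemma Cls_nbhd:
  assumes "c \<in> Trees0 \<union> Trees1"
  shows "\<exists>A\<in>Cls. c \<in> A \<and> (\<forall>w\<in>A. restr h w = restr h c)"
proof (cases "c \<in> Trees0")
  case True then show ?thesis unfolding Cls_def by blast
next
  case False
  then have "c \<in> Trees1" using assms by blast
  then show ?thesis using T1_nbhd[of c h] unfolding Cls_def by blast
qed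

definition ev :: "'a measure \<Rightarrow> ('a \<Rightarrow> 'b) \<Rightarrow> 'b set \<Rightarrow> 'a set" where
  "ev M Y A = {\<omega>\<in>space M. Y \<omega> \<in> A}"

lemma ev_Un: "ev M Y (A \<union> B) = ev M Y A \<union> ev M Y B" unfolding ev_def by auto
lemma ev_Int: "ev M Y (A \<inter> B) = ev M Y A \<inter> ev M Y B" unfolding ev_def by auto
lemma ev_Diff: "ev M Y (A - B) = ev M Y A - ev M Y B" unfolding ev_def by auto
lemma ev_empty: "ev M Y {} = {}" unfolding ev_def by auto

lemma Y_Trees: assumes "Y \<in> measurable M tree_space" "\<omega> \<in> space M" shows "Y \<omega> \<in> Trees"
  using measurable_space[OF assms] space_tree_space by simp

lemma ev_sets: "Y \<in> measurable M tree_space \<Longrightarrow> A \<in> sets tree_space \<Longrightarrow> ev M Y A \<in> sets M"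
proof -
  assume "Y \<in> measurable M tree_space" "A \<in> sets tree_space"
  then have "Y -` A \<inter> space M \<in> sets M" by (rule measurable_sets)
  moreover have "Y -` A \<inter> space M = ev M Y A" unfolding ev_def by auto
  ultimately show ?thesis by simp
qed

lemma (in prob_space) prob_Un:
  assumes "E \<in> events" "F \<in> events"
  shows "prob (E \<union> F) = prob E + prob F - prob (E \<inter> F)"
  using finite_measure_Union'[OF assms] finite_measure_Diff'[OF assms(2,1)]
  by (simp add: Int_commute)

lemma Union_sets_tree: "set L \<subseteq> insert {} Cls \<Longrightarrow> \<Union>(set L) \<in> sets tree_space"
  using Cls_sets by (intro sets.finite_Union) auto

lemma (in prob_space) finite_union_conv:
  assumes Tm: "\<And>n. T n \<in> measurable M tree_space" and Xm: "X \<in> measurable M tree_space"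
    and H: "\<forall>A\<in>insert {} Cls. (\<lambda>n. prob (ev M (T n) A)) \<longlonglongrightarrow> prob (ev M X A)"
  shows "set L \<subseteq> insert {} Cls \<Longrightarrow>
    (\<lambda>n. prob (ev M (T n) (\<Union>(set L)))) \<longlonglongrightarrow> prob (ev M X (\<Union>(set L)))"
proof (induction "length L" arbitrary: L)
  case 0 then show ?case by (simp add: ev_empty)
next
  case (Suc k)
  then obtain A L' where L: "L = A # L'" "length L' = k" by (cases L) auto
  have A: "A \<in> insert {} Cls" and L': "set L' \<subseteq> insert {} Cls" using Suc(3) L by auto
  define U where "U = \<Union>(set L')"
  have AU: "A \<inter> U = \<Union>(set (map ((\<inter>) A) L'))" unfolding U_def by auto
  have L'': "set (map ((\<inter>) A) L') \<subseteq> insert {} Cls" using Cls_inter[OF A] L' by auto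
  have IH1: "(\<lambda>n. prob (ev M (T n) U)) \<longlonglongrightarrow> prob (ev M X U)"
    unfolding U_def using Suc(1)[OF L(2)[symmetric] L'] .
  have IH2: "(\<lambda>n. prob (ev M (T n) (A \<inter> U))) \<longlonglongrightarrow> prob (ev M X (A \<inter> U))"
    unfolding AU using Suc(1)[of "map ((\<inter>) A) L'"] L(2) L'' by simp
  have HA: "(\<lambda>n. prob (ev M (T n) A)) \<longlonglongrightarrow> prob (ev M X A)" using H A by blast
  have As: "A \<in> sets tree_space" using Cls_sets[OF A] by blast
  have Us: "U \<in> sets tree_space" unfolding U_def using Union_sets_tree[OF L'] .
  have eq: "prob (ev M Y (A \<union> U)) = prob (ev M Y A) + prob (ev M Y U) - prob (ev M Y (A \<inter> U))"
    if "Y \<in> measurable M tree_space" for Y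
    unfolding ev_Un ev_Int by (intro prob_Un ev_sets[OF that] As Us)
  have "(\<lambda>n. prob (ev M (T n) A) + prob (ev M (T n) U) - prob (ev M (T n) (A \<inter> U)))
      \<longlonglongrightarrow> prob (ev M X A) + prob (ev M X U) - prob (ev M X (A \<inter> U))"
    by (intro tendsto_intros HA IH1 IH2)
  then show ?case unfolding L using eq[OF Tm] eq[OF Xm] by (simp add: U_def)
qed

lemma f_meas:
  assumes "tree_bounded_continuous f"
  shows "f \<in> borel_measurable tree_space"
proof (rule borel_measurableI)
  fix S :: "real set" assume S: "open S"
  have "tree_open (f -` S \<inter> Trees)"
    unfolding tree_open_def
  proof (intro conjI ballI)
    fix t assume t: "t \<in> f -` S \<inter> Trees"
    then obtain e where e: "e > 0" "\<forall>y. dist y (f t) < e \<longrightarrow> y \<in> S"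
      using S unfolding open_dist by blast
    obtain d where d: "d > 0" "\<forall>t'\<in>Trees. tree_dist t t' < d \<longrightarrow> \<bar>f t' - f t\<bar> < e"
      using assms e(1) t unfolding tree_bounded_continuous_def by blast
    show "\<exists>e>0. \<forall>t'\<in>Trees. tree_dist t t' < e \<longrightarrow> t' \<in> f -` S \<inter> Trees"
    proof (intro exI[of _ d] conjI ballI impI)
      fix t' assume "t' \<in> Trees" "tree_dist t t' < d"
      then have "dist (f t') (f t) < e" using d(2) by (simp add: dist_real_def)
      then show "t' \<in> f -` S \<inter> Trees" using e(2) \<open>t' \<in> Trees\<close> by blast
    qed (rule d(1))
  qed auto
  then show "f -` S \<inter> space tree_space \<in> sets tree_space"
    using tree_open_sets space_tree_space by simp
qed

lemma (in prob_space) f_integrable: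
  assumes "tree_bounded_continuous f" "\<forall>t\<in>Trees. \<bar>f t\<bar> \<le> B" "Y \<in> measurable M tree_space"
  shows "integrable M (\<lambda>\<omega>. f (Y \<omega>))"
proof (rule integrable_const_bound[where B=B])
  show "AE x in M. norm (f (Y x)) \<le> B" using assms(2) Y_Trees[OF assms(3)] by (intro AE_I2) simp
  show "(\<lambda>\<omega>. f (Y \<omega>)) \<in> borel_measurable M" using measurable_compose[OF assms(3) f_meas[OF assms(1)]] .
qed

lemma (in prob_space) indicator_integrable:
  "S \<in> events \<Longrightarrow> integrable M (indicator S :: _ \<Rightarrow> real)"
  by (simp add: integrable_indicator_iff Int_absorb2 sets.sets_into_space less_top[symmetric])

lemma ev_space: "ev M Y A \<inter> space M = ev M Y A" unfolding ev_def by auto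

lemma (in prob_space) approx:
  assumes Tm: "\<And>n. T n \<in> measurable M tree_space" and Xm: "X \<in> measurable M tree_space"
    and H: "\<forall>A\<in>insert {} Cls. (\<lambda>n. prob (ev M (T n) A)) \<longlonglongrightarrow> prob (ev M X A)"
    and AEX: "AE \<omega> in M. X \<omega> \<in> Trees0 \<union> Trees1"
    and fc: "tree_bounded_continuous f" and Bf: "\<forall>t\<in>Trees. \<bar>f t\<bar> \<le> B" and B0: "0 \<le> B"
    and ep: "\<epsilon> > 0"
  shows "\<exists>N0. \<forall>n\<ge>N0. \<bar>(\<integral>\<omega>. f (T n \<omega>) \<partial>M) - (\<integral>\<omega>. f (X \<omega>) \<partial>M)\<bar> \<le> (3 + 3*B) * \<epsilon>"
proof -
  define F where "F = {A \<in> insert {} Cls. \<forall>w\<in>A. \<forall>w'\<in>A. \<bar>f w - f w'\<bar> \<le> \<epsilon>}"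
  have Fc: "countable F" by (rule countable_subset[OF _ Cls_countable]) (auto simp: F_def)
  have Fne: "{} \<in> F" unfolding F_def by simp
  define G where "G = from_nat_into F"
  have rG: "range G = F" unfolding G_def using Fc Fne by (intro range_from_nat_into) auto
  have GF: "G i \<in> F" for i using rG by blast
  have Gs: "G i \<in> sets tree_space" "G i \<subseteq> Trees" for i using GF[of i] Cls_sets unfolding F_def by auto
  have Gosc: "\<bar>f w - f w'\<bar> \<le> \<epsilon>" if "w \<in> G i" "w' \<in> G i" for w w' i
    using GF[of i] that unfolding F_def by blast
  have cover: "\<exists>i. c \<in> G i" if c: "c \<in> Trees0 \<union> Trees1" for c
  proof -
    have cT: "c \<in> Trees" using c unfolding Trees0_def Trees1_def by blast
    have "\<epsilon>/2 > 0" using ep by simp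
    then obtain d where d: "d > 0" "\<forall>t'\<in>Trees. tree_dist c t' < d \<longrightarrow> \<bar>f t' - f c\<bar> < \<epsilon>/2"
      using fc cT unfolding tree_bounded_continuous_def by blast
    obtain h where h: "(1/2::real)^h < d" using real_arch_pow_inv[OF d(1), of "1/2"] by auto
    obtain A where A: "A \<in> Cls" "c \<in> A" "\<forall>w\<in>A. restr h w = restr h c" using Cls_nbhd[OF c] by blast
    have AT: "A \<subseteq> Trees" using Cls_sets[of A] A(1) by blast
    have close: "\<bar>f w - f c\<bar> < \<epsilon>/2" if "w \<in> A" for w
    proof -
      have wT: "w \<in> Trees" using AT that by blast
      have "tree_dist c w \<le> (1/2)^h" using restr_dist[OF cT wT, of h] A(3) that by simp
      then show ?thesis using d(2) h wT by simp
    qed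
    have "\<bar>f w - f w'\<bar> \<le> \<epsilon>" if "w \<in> A" "w' \<in> A" for w w'
      using close[OF that(1)] close[OF that(2)] by arith
    then have "A \<in> F" unfolding F_def using A(1) by blast
    then show ?thesis using rG A(2) by (metis rangeE)
  qed
  define U where "U N = (\<Union>i\<in>{..<N}. G i)" for N
  have UL: "U N = \<Union>(set (map G [0..<N]))" for N unfolding U_def by auto
  have ULs: "set (map G [0..<N]) \<subseteq> insert {} Cls" for N using GF unfolding F_def by auto
  have Us: "U N \<in> sets tree_space" for N unfolding UL using Union_sets_tree[OF ULs] .
  have Uconv: "(\<lambda>n. prob (ev M (T n) (U N))) \<longlonglongrightarrow> prob (ev M X (U N))" for N
    unfolding UL by (rule finite_union_conv[OF Tm Xm H ULs])
  have Uinc: "incseq (\<lambda>N. ev M X (U N))" unfolding incseq_def U_def ev_def by auto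
  have Uev: "range (\<lambda>N. ev M X (U N)) \<subseteq> events" using ev_sets[OF Xm Us] by auto
  have UU: "(\<Union>N. ev M X (U N)) = ev M X (\<Union>i. G i)" unfolding U_def ev_def by auto
  have Gall: "(\<Union>i. G i) \<in> sets tree_space" using Gs by (intro sets.countable_UN) auto
  have p1: "prob (ev M X (\<Union>i. G i)) = 1"
  proof -
    have "AE \<omega> in M. \<omega> \<in> ev M X (\<Union>i. G i)"
      using AEX AE_space by eventually_elim (auto simp: ev_def intro!: cover)
    then show ?thesis using prob_eq_1 ev_sets[OF Xm Gall] by simp
  qed
  have "(\<lambda>N. prob (ev M X (U N))) \<longlonglongrightarrow> 1" using finite_Lim_measure_incseq[OF Uev Uinc] UU p1 by simp
  then have "eventually (\<lambda>N. prob (ev M X (U N)) > 1 - \<epsilon>) sequentially"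
    by (rule order_tendstoD(1)) (use ep in simp)
  then obtain N where N: "prob (ev M X (U N)) \<ge> 1 - \<epsilon>" unfolding eventually_sequentially
    by (meson less_imp_le order_refl)
  define D where "D i = G i - U i" for i
  have Ds: "D i \<in> sets tree_space" for i unfolding D_def using Gs Us by auto
  define c where "c i = (SOME w. w \<in> G i)" for i
  define g where "g Y \<omega> = (\<Sum>i<N. f (c i) * indicator (ev M Y (D i)) \<omega>)" for Y \<omega>
  have gint: "integrable M (g Y)" if Ym: "Y \<in> measurable M tree_space" for Y
    unfolding g_def by (rule Bochner_Integration.integrable_sum, rule integrable_mult_right, rule indicator_integrable, rule ev_sets[OF Ym Ds])
  have gval: "integral\<^sup>L M (g Y) = (\<Sum>i<N. f (c i) * prob (ev M Y (D i)))" if Ym: "Y \<in> measurable M tree_space" for Y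
  proof -
    have "integral\<^sup>L M (g Y) = (\<Sum>i<N. integral\<^sup>L M (\<lambda>\<omega>. f (c i) * indicator (ev M Y (D i)) \<omega>))"
      unfolding g_def by (rule Bochner_Integration.integral_sum, rule integrable_mult_right, rule indicator_integrable, rule ev_sets[OF Ym Ds])
    also have "\<dots> = (\<Sum>i<N. f (c i) * prob (ev M Y (D i)))" by (simp add: ev_space)
    finally show ?thesis .
  qed
  have Dprob: "prob (ev M Y (D i)) = prob (ev M Y (U (Suc i))) - prob (ev M Y (U i))"
    if Ym: "Y \<in> measurable M tree_space" for Y i
  proof -
    have "D i = U (Suc i) - U i" unfolding D_def U_def by (auto simp: lessThan_Suc)
    moreover have "ev M Y (U i) \<subseteq> ev M Y (U (Suc i))" unfolding U_def ev_def by auto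
    ultimately show ?thesis using finite_measure_Diff[OF ev_sets[OF Ym Us] ev_sets[OF Ym Us]] by (simp add: ev_Diff)
  qed
  have gconv: "(\<lambda>n. integral\<^sup>L M (g (T n))) \<longlonglongrightarrow> integral\<^sup>L M (g X)"
    unfolding gval[OF Tm] gval[OF Xm] Dprob[OF Tm] Dprob[OF Xm] by (intro tendsto_intros Uconv)
  have pw: "\<bar>f (Y \<omega>) - g Y \<omega>\<bar> \<le> \<epsilon> + B * indicator (space M - ev M Y (U N)) \<omega>"
    if Ym: "Y \<in> measurable M tree_space" and om: "\<omega> \<in> space M" for Y \<omega>
  proof (cases "Y \<omega> \<in> U N")
    case True
    define i0 where "i0 = (LEAST i. Y \<omega> \<in> G i)"
    obtain j where j: "j < N" "Y \<omega> \<in> G j" using True unfolding U_def by blast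
    have i0: "Y \<omega> \<in> G i0" "i0 \<le> j"
      using LeastI[of "\<lambda>i. Y \<omega> \<in> G i" j] Least_le[of "\<lambda>i. Y \<omega> \<in> G i" j] j unfolding i0_def by auto
    have iff: "\<omega> \<in> ev M Y (D k) \<longleftrightarrow> k = i0" for k
    proof (cases k i0 rule: linorder_cases)
      case less
      then have "Y \<omega> \<notin> G k" using not_less_Least[of k "\<lambda>i. Y \<omega> \<in> G i"] unfolding i0_def by blast
      then show ?thesis using less unfolding ev_def D_def by auto
    next
      case equal
      have "Y \<omega> \<notin> G i" if "i < i0" for i using not_less_Least[of i "\<lambda>i. Y \<omega> \<in> G i"] that unfolding i0_def by blast
      then show ?thesis using equal i0 om unfolding ev_def D_def U_def by auto
    next
      case greater
      then show ?thesis using i0 unfolding ev_def D_def U_def by auto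
    qed
    have eqf: "(\<lambda>i. f (c i) * indicator (ev M Y (D i)) \<omega>) = (\<lambda>i. if i = i0 then f (c i0) else 0)"
      using iff by (auto simp: indicator_def)
    have "g Y \<omega> = (\<Sum>i<N. if i = i0 then f (c i0) else 0)" unfolding g_def eqf ..
    also have "\<dots> = f (c i0)" using i0 j by simp
    finally have "g Y \<omega> = f (c i0)" .
    moreover have "c i0 \<in> G i0" unfolding c_def using i0(1) by (rule someI)
    ultimately have "\<bar>f (Y \<omega>) - g Y \<omega>\<bar> \<le> \<epsilon>" using Gosc i0(1) by simp
    moreover have "0 \<le> B * indicator (space M - ev M Y (U N)) \<omega>" using B0 by simp
    ultimately show ?thesis by linarith
  next
    case False
    have "\<omega> \<notin> ev M Y (D i)" if "i < N" for i using False that unfolding ev_def D_def U_def by auto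
    then have "g Y \<omega> = 0" unfolding g_def by (intro sum.neutral) auto
    moreover have "\<bar>f (Y \<omega>)\<bar> \<le> B" using Bf Y_Trees[OF Ym om] by blast
    moreover have "indicator (space M - ev M Y (U N)) \<omega> = (1::real)" using False om unfolding ev_def by simp
    ultimately show ?thesis using ep by simp
  qed
  have bound: "\<bar>integral\<^sup>L M (\<lambda>\<omega>. f (Y \<omega>)) - integral\<^sup>L M (g Y)\<bar> \<le> \<epsilon> + B * (1 - prob (ev M Y (U N)))"
    if Ym: "Y \<in> measurable M tree_space" for Y
  proof -
    have i1: "integrable M (\<lambda>\<omega>. f (Y \<omega>))" by (rule f_integrable[OF fc Bf Ym])
    have Sev: "space M - ev M Y (U N) \<in> events" using ev_sets[OF Ym Us] by blast
    have i2: "integrable M (\<lambda>\<omega>. \<epsilon> + B * indicator (space M - ev M Y (U N)) \<omega>)"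
      by (rule Bochner_Integration.integrable_add, rule integrable_const, rule integrable_mult_right, rule indicator_integrable[OF Sev])
    have i3: "integrable M (\<lambda>\<omega>. \<bar>f (Y \<omega>) - g Y \<omega>\<bar>)"
      by (rule Bochner_Integration.integrable_abs, rule Bochner_Integration.integrable_diff, rule i1, rule gint[OF Ym])
    have "\<bar>integral\<^sup>L M (\<lambda>\<omega>. f (Y \<omega>)) - integral\<^sup>L M (g Y)\<bar> = \<bar>\<integral>\<omega>. f (Y \<omega>) - g Y \<omega> \<partial>M\<bar>"
      using Bochner_Integration.integral_diff[OF i1 gint[OF Ym]] by simp
    also have "\<dots> \<le> (\<integral>\<omega>. \<bar>f (Y \<omega>) - g Y \<omega>\<bar> \<partial>M)" by (rule integral_abs_bound)
    also have "\<dots> \<le> (\<integral>\<omega>. \<epsilon> + B * indicator (space M - ev M Y (U N)) \<omega> \<partial>M)"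
      by (rule integral_mono[OF i3 i2]) (rule pw[OF Ym])
    also have "\<dots> = \<epsilon> + B * prob (space M - ev M Y (U N))"
      using Bochner_Integration.integral_add[OF integrable_const integrable_mult_right[OF indicator_integrable[OF Sev]], of \<epsilon> B]
      by (simp add: prob_space Int_absorb2)
    also have "\<dots> = \<epsilon> + B * (1 - prob (ev M Y (U N)))" using prob_compl[OF ev_sets[OF Ym Us]] by simp
    finally show ?thesis .
  qed
  obtain n1 where n1: "\<forall>n\<ge>n1. \<bar>prob (ev M (T n) (U N)) - prob (ev M X (U N))\<bar> < \<epsilon>"
    using Uconv[of N] ep unfolding LIMSEQ_iff by (metis real_norm_def)
  obtain n2 where n2: "\<forall>n\<ge>n2. \<bar>integral\<^sup>L M (g (T n)) - integral\<^sup>L M (g X)\<bar> < \<epsilon>"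
    using gconv ep unfolding LIMSEQ_iff by (metis real_norm_def)
  show ?thesis
  proof (intro exI[of _ "max n1 n2"] allI impI)
    fix n assume n: "max n1 n2 \<le> n"
    have a1: "\<bar>prob (ev M (T n) (U N)) - prob (ev M X (U N))\<bar> < \<epsilon>" using n1 n by simp
    have a2: "\<bar>integral\<^sup>L M (g (T n)) - integral\<^sup>L M (g X)\<bar> < \<epsilon>" using n2 n by simp
    have b1: "\<bar>integral\<^sup>L M (\<lambda>\<omega>. f (T n \<omega>)) - integral\<^sup>L M (g (T n))\<bar> \<le> \<epsilon> + B * (1 - prob (ev M (T n) (U N)))"
      by (rule bound[OF Tm])
    have b2: "\<bar>integral\<^sup>L M (\<lambda>\<omega>. f (X \<omega>)) - integral\<^sup>L M (g X)\<bar> \<le> \<epsilon> + B * (1 - prob (ev M X (U N)))"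
      by (rule bound[OF Xm])
    have m1: "B * (1 - prob (ev M (T n) (U N))) \<le> B * (2 * \<epsilon>)"
      by (rule mult_left_mono[OF _ B0]) (use a1 N in arith)
    have m2: "B * (1 - prob (ev M X (U N))) \<le> B * \<epsilon>"
      by (rule mult_left_mono[OF _ B0]) (use N in arith)
    show "\<bar>(\<integral>\<omega>. f (T n \<omega>) \<partial>M) - (\<integral>\<omega>. f (X \<omega>) \<partial>M)\<bar> \<le> (3 + 3*B) * \<epsilon>"
      using a2 b1 b2 m1 m2 by (simp add: algebra_simps)
  qed
qed

lemma Cls_cyl: "A \<in> Cls \<Longrightarrow> \<exists>h. cyl h A"
proof -
  assume "A \<in> Cls"
  then consider t where "t \<in> Trees0" "A = {t}" | t x where "t \<in> Trees0" "x \<in> leaves t" "A = Gr t x"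
    unfolding Cls_def by blast
  then show ?thesis
  proof cases
    case 1
    then obtain h where "\<forall>u\<in>t. length u < h" using finite_height unfolding Trees0_def by blast
    then show ?thesis using cyl_single 1 by blast
  next
    case 2
    then obtain h where "\<forall>u\<in>t. length u < h" using finite_height unfolding Trees0_def by blast
    then show ?thesis using cyl_Gr[OF leaves_in[OF 2(2)]] 2 by blast
  qed
qed

lemma ind_cont:
  assumes "A \<in> Cls"
  shows "tree_bounded_continuous (indicator A :: node set \<Rightarrow> real)"
  unfolding tree_bounded_continuous_def
proof (intro conjI ballI allI impI)
  show "\<exists>B. \<forall>t\<in>Trees. \<bar>indicator A t :: real\<bar> \<le> B" by (intro exI[of _ 1]) (simp add: indicator_def)
  obtain h where h: "cyl h A" using Cls_cyl[OF assms] by blast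
  fix t :: "node set" and e :: real assume t: "t \<in> Trees" and e: "0 < e"
  show "\<exists>\<delta>>0. \<forall>t'\<in>Trees. tree_dist t t' < \<delta> \<longrightarrow> \<bar>indicator A t' - indicator A t :: real\<bar> < e"
  proof (intro exI[of _ "(1/2)^h"] conjI ballI impI)
    fix t' assume t': "t' \<in> Trees" "tree_dist t t' < (1/2)^h"
    then have "restr h t = restr h t'" using dist_restr[OF t t'(1)] by simp
    then have "(t \<in> A) = (t' \<in> A)" using h[unfolded cyl_def, rule_format, OF t t'(1)] by blast
    then show "\<bar>indicator A t' - indicator A t :: real\<bar> < e" using e by (simp add: indicator_def)
  qed simp
qed

lemma (in prob_space) integral_ind:
  "(\<integral>\<omega>. indicator A (Y \<omega>) \<partial>M) = prob (ev M Y A)"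
proof -
  have "(\<integral>\<omega>. indicator A (Y \<omega>) \<partial>M) = (\<integral>\<omega>. indicator (ev M Y A) \<omega> \<partial>M)"
    by (rule Bochner_Integration.integral_cong) (auto simp: ev_def indicator_def)
  also have "\<dots> = measure M (ev M Y A \<inter> space M)" by (rule Bochner_Integration.integral_indicator)
  finally show ?thesis by (simp add: ev_space)
qed

lemma ev_graft:
  assumes "Y \<in> measurable M tree_space" "x \<in> leaves t"
  shows "{\<omega> \<in> space M. Y \<omega> \<in> graft_set t x} = ev M Y (Gr t x)"
proof -
  have "graft_set t x \<inter> Trees = Gr t x" using graft_Gr leaves_in[OF assms(2)] by blast
  then show ?thesis unfolding ev_def using Y_Trees[OF assms(1)] by blast
qed

lemma ev_single: "{\<omega> \<in> space M. Y \<omega> = t} = ev M Y {t}" unfolding ev_def by auto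

theorem lemma2p1:
  fixes P :: "'a measure" and T :: "nat \<Rightarrow> 'a \<Rightarrow> node set" and X :: "'a \<Rightarrow> node set"
  assumes "prob_space P"
    and "\<And>n. T n \<in> measurable P tree_space"
    and "X \<in> measurable P tree_space"
    and "\<And>n. AE \<omega> in P. T n \<omega> \<in> Trees0 \<union> Trees1"
    and "AE \<omega> in P. X \<omega> \<in> Trees0 \<union> Trees1"
  shows "conv_distr P T X \<longleftrightarrow>
    (\<forall>t\<in>Trees0. \<forall>x\<in>leaves t.
       (\<lambda>n. measure P {\<omega> \<in> space P. T n \<omega> \<in> graft_set t x})
          \<longlonglongrightarrow> measure P {\<omega> \<in> space P. X \<omega> \<in> graft_set t x}
     \<and> (\<lambda>n. measure P {\<omega> \<in> space P. T n \<omega> = t})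
          \<longlonglongrightarrow> measure P {\<omega> \<in> space P. X \<omega> = t})"
proof -
  interpret prob_space P by fact
  note Tm = assms(2) and Xm = assms(3)
  have RHS: "(\<forall>t\<in>Trees0. \<forall>x\<in>leaves t.
       (\<lambda>n. measure P {\<omega> \<in> space P. T n \<omega> \<in> graft_set t x})
          \<longlonglongrightarrow> measure P {\<omega> \<in> space P. X \<omega> \<in> graft_set t x}
     \<and> (\<lambda>n. measure P {\<omega> \<in> space P. T n \<omega> = t})
          \<longlonglongrightarrow> measure P {\<omega> \<in> space P. X \<omega> = t})
     \<longleftrightarrow> (\<forall>A\<in>Cls. (\<lambda>n. prob (ev P (T n) A)) \<longlonglongrightarrow> prob (ev P X A))"
    (is "?L \<longleftrightarrow> ?R")
  proof
    assume L: ?L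
    show ?R
    proof
      fix A assume "A \<in> Cls"
      then consider t where "t \<in> Trees0" "A = {t}" | t x where "t \<in> Trees0" "x \<in> leaves t" "A = Gr t x"
        unfolding Cls_def by blast
      then show "(\<lambda>n. prob (ev P (T n) A)) \<longlonglongrightarrow> prob (ev P X A)"
      proof cases
        case 1
        have "leaves t \<noteq> {}"
        proof -
          have "finite t" "is_tree t" using 1 unfolding Trees0_def Trees_def by auto
          obtain h where h: "\<forall>u\<in>t. length u < h" using finite_height \<open>finite t\<close> by blast
          have "[] \<in> t" using \<open>is_tree t\<close> unfolding is_tree_def by blast
          then have "\<exists>u\<in>t. length u = 0" by force
          moreover have "\<forall>y. (\<exists>u\<in>t. length u = y) \<longrightarrow> y \<le> h" using h by fastforce
          ultimately obtain m where m: "\<exists>u\<in>t. length u = m" "\<forall>y. (\<exists>u\<in>t. length u = y) \<longrightarrow> y \<le> m"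
            using Nat.ex_has_greatest_nat[of "\<lambda>m. \<exists>u\<in>t. length u = m" 0 h] by blast
          then obtain u where u: "u \<in> t" "\<forall>v\<in>t. length v \<le> length u" by blast
          have "u \<in> leaves t" unfolding leaves_def using u by fastforce
          then show ?thesis by blast
        qed
        then obtain x where "x \<in> leaves t" by blast
        then have "(\<lambda>n. prob {\<omega> \<in> space P. T n \<omega> = t}) \<longlonglongrightarrow> prob {\<omega> \<in> space P. X \<omega> = t}"
          using L 1(1) by blast
        then show ?thesis using 1(2) by (simp add: ev_single)
      next
        case 2
        then have "(\<lambda>n. prob {\<omega> \<in> space P. T n \<omega> \<in> graft_set t x}) \<longlonglongrightarrow> prob {\<omega> \<in> space P. X \<omega> \<in> graft_set t x}"
          using L by blast
        then show ?thesis using 2(3) unfolding ev_graft[OF Tm 2(2)] ev_graft[OF Xm 2(2)] by simp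
      qed
    qed
  next
    assume R: ?R
    show ?L
    proof (intro ballI conjI)
      fix t x assume t: "t \<in> Trees0" and x: "x \<in> leaves t"
      have "Gr t x \<in> Cls" "{t} \<in> Cls" using t x unfolding Cls_def by blast+
      then have c1: "(\<lambda>n. prob (ev P (T n) (Gr t x))) \<longlonglongrightarrow> prob (ev P X (Gr t x))"
        and c2: "(\<lambda>n. prob (ev P (T n) {t})) \<longlonglongrightarrow> prob (ev P X {t})" using R by blast+
      show "(\<lambda>n. measure P {\<omega> \<in> space P. T n \<omega> \<in> graft_set t x})
          \<longlonglongrightarrow> measure P {\<omega> \<in> space P. X \<omega> \<in> graft_set t x}"
        unfolding ev_graft[OF Tm x] ev_graft[OF Xm x] by (rule c1)
      show "(\<lambda>n. measure P {\<omega> \<in> space P. T n \<omega> = t}) \<longlonglongrightarrow> measure P {\<omega> \<in> space P. X \<omega> = t}"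
        unfolding ev_single by (rule c2)
    qed
  qed
  have "conv_distr P T X \<longleftrightarrow> (\<forall>A\<in>Cls. (\<lambda>n. prob (ev P (T n) A)) \<longlonglongrightarrow> prob (ev P X A))"
  proof
    assume C: "conv_distr P T X"
    show "\<forall>A\<in>Cls. (\<lambda>n. prob (ev P (T n) A)) \<longlonglongrightarrow> prob (ev P X A)"
    proof
      fix A assume "A \<in> Cls"
      from C[unfolded conv_distr_def, rule_format, OF ind_cont[OF this]]
      show "(\<lambda>n. prob (ev P (T n) A)) \<longlonglongrightarrow> prob (ev P X A)" by (simp add: integral_ind)
    qed
  next
    assume R: "\<forall>A\<in>Cls. (\<lambda>n. prob (ev P (T n) A)) \<longlonglongrightarrow> prob (ev P X A)"
    then have H: "\<forall>A\<in>insert {} Cls. (\<lambda>n. prob (ev P (T n) A)) \<longlonglongrightarrow> prob (ev P X A)"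
      by (simp add: ev_empty)
    show "conv_distr P T X" unfolding conv_distr_def
    proof (intro allI impI)
      fix f assume fc: "tree_bounded_continuous f"
      then obtain B0 where "\<forall>t\<in>Trees. \<bar>f t\<bar> \<le> B0" unfolding tree_bounded_continuous_def by blast
      then have Bf: "\<forall>t\<in>Trees. \<bar>f t\<bar> \<le> max B0 0" by (meson max.coboundedI1)
      define B where "B = max B0 0"
      have B: "\<forall>t\<in>Trees. \<bar>f t\<bar> \<le> B" "0 \<le> B" using Bf unfolding B_def by auto
      show "(\<lambda>n. \<integral>\<omega>. f (T n \<omega>) \<partial>P) \<longlonglongrightarrow> (\<integral>\<omega>. f (X \<omega>) \<partial>P)"
        unfolding LIMSEQ_iff real_norm_def
      proof (intro allI impI)
        fix r :: real assume r: "0 < r"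
        define \<epsilon> where "\<epsilon> = r / (2 * (3 + 3 * B))"
        have ep: "\<epsilon> > 0" unfolding \<epsilon>_def using r B(2) by simp
        have eq: "(3 + 3 * B) * \<epsilon> = r / 2" unfolding \<epsilon>_def using B(2) by (simp add: field_simps)
        obtain N0 where N0: "\<forall>n\<ge>N0. \<bar>(\<integral>\<omega>. f (T n \<omega>) \<partial>P) - (\<integral>\<omega>. f (X \<omega>) \<partial>P)\<bar> \<le> (3 + 3*B) * \<epsilon>"
          using approx[OF Tm Xm H assms(5) fc B ep] by blast
        show "\<exists>no. \<forall>n\<ge>no. \<bar>(\<integral>\<omega>. f (T n \<omega>) \<partial>P) - (\<integral>\<omega>. f (X \<omega>) \<partial>P)\<bar> < r"
          using N0 eq r by (metis half_gt_zero order_le_less_trans field_sum_of_halves less_add_same_cancel1)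
      qed
    qed
  qed
  then show ?thesis using RHS by simp
qed

end
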